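(* Let $R$ be a commutative ring with identity, $M$ an $R$-module and $a\in R$. Then $a\Gamma_{a}\big(M/a\Gamma_{a}(M)\big)=0$.
   Context: For an $R$-module $N$ and $a\in R$: $\Gamma_{a}(N)=\{n\in N \mid a^{k}n=0 \text{ for some } k\in\mathbb{Z}^{+}\}$ and $a\Gamma_{a}(N)=\{an \mid n\in \Gamma_a(N)\}$. *)

theory Defs
  imports "HOL-Algebra.Algebra"
begin

definition Gamma :: "('a, 'c) ring_scheme \<Rightarrow> ('a, 'b, 'd) module_scheme \<Rightarrow> 'a \<Rightarrow> 'b set" where
  "Gamma R N a = {n \<in> carrier N. \<exists>k::nat. k > 0 \<and> (a [^]\<^bsub>R\<^esub> k) \<odot>\<^bsub>N\<^esub> n = \<zero>\<^bsub>N\<^esub>}"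

definition aGamma :: "('a, 'c) ring_scheme \<Rightarrow> ('a, 'b, 'd) module_scheme \<Rightarrow> 'a \<Rightarrow> 'b set" where
  "aGamma R N a = (\<lambda>n. a \<odot>\<^bsub>N\<^esub> n) ` Gamma R N a"

text \<open>Quotient module M/N, with elements the additive cosets of N in M.
  The ring multiplication field is irrelevant for modules and is set trivially.\<close>
definition quot_module :: "('a, 'c) ring_scheme \<Rightarrow> ('a, 'b, 'd) module_scheme \<Rightarrow> 'b set \<Rightarrow> ('a, 'b set) module" where
  "quot_module R M N =
    \<lparr> carrier = a_rcosets\<^bsub>M\<^esub> N,
      monoid.mult = (\<lambda>_ _. N),
      one = N,
      ring.zero = N,
      ring.add = set_add M,
      module.smult = (\<lambda>r S. \<Union>x\<in>S. a_r_coset M N (smult M r x)) \<rparr>"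

end

theory Submission
  imports Defs
begin

context module
begin

lemma pw_zero:
  assumes "b \<in> carrier R" "x \<in> carrier M" "b \<odot>\<^bsub>M\<^esub> x = \<zero>\<^bsub>M\<^esub>" "c \<in> carrier R"
  shows "(c \<otimes> b) \<odot>\<^bsub>M\<^esub> x = \<zero>\<^bsub>M\<^esub>"
  using assms by (simp add: smult_assoc1)

lemma G_carr: "Gamma R M a \<subseteq> carrier M"
  unfolding Gamma_def by auto

lemma G_zero: "a \<in> carrier R \<Longrightarrow> \<zero>\<^bsub>M\<^esub> \<in> Gamma R M a"
  unfolding Gamma_def by (auto intro!: exI[of _ 1])

lemma G_add:
  assumes a: "a \<in> carrier R" and x: "x \<in> Gamma R M a" and y: "y \<in> Gamma R M a"
  shows "x \<oplus>\<^bsub>M\<^esub> y \<in> Gamma R M a"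
proof -
  obtain k :: nat where k: "k > 0" "(a [^] k) \<odot>\<^bsub>M\<^esub> x = \<zero>\<^bsub>M\<^esub>" "x \<in> carrier M"
    using x unfolding Gamma_def by blast
  obtain m :: nat where m: "m > 0" "(a [^] m) \<odot>\<^bsub>M\<^esub> y = \<zero>\<^bsub>M\<^esub>" "y \<in> carrier M"
    using y unfolding Gamma_def by blast
  have e: "a [^] (k + m) = a [^] m \<otimes> a [^] k" "a [^] (k + m) = a [^] k \<otimes> a [^] m"
    using a by (simp_all add: R.nat_pow_mult R.m_comm)
  have 1: "(a [^] (k+m)) \<odot>\<^bsub>M\<^esub> x = \<zero>\<^bsub>M\<^esub>"
    unfolding e(1) using k m a by (simp add: smult_assoc1)
  have 2: "(a [^] (k+m)) \<odot>\<^bsub>M\<^esub> y = \<zero>\<^bsub>M\<^esub>"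
    unfolding e(2) using k m a by (simp add: smult_assoc1)
  have "(a [^] (k+m)) \<odot>\<^bsub>M\<^esub> (x \<oplus>\<^bsub>M\<^esub> y) = \<zero>\<^bsub>M\<^esub>"
    using k m a 1 2 by (simp add: smult_r_distr)
  then show ?thesis using k m unfolding Gamma_def by (auto intro!: exI[of _ "k+m"])
qed

lemma G_neg:
  assumes a: "a \<in> carrier R" and x: "x \<in> Gamma R M a"
  shows "\<ominus>\<^bsub>M\<^esub> x \<in> Gamma R M a"
proof -
  obtain k :: nat where k: "k > 0" "(a [^] k) \<odot>\<^bsub>M\<^esub> x = \<zero>\<^bsub>M\<^esub>" "x \<in> carrier M"
    using x unfolding Gamma_def by blast
  have "(a [^] k) \<odot>\<^bsub>M\<^esub> (\<ominus>\<^bsub>M\<^esub> x) = \<zero>\<^bsub>M\<^esub>"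
    using k a by (simp add: smult_r_minus)
  then show ?thesis using k unfolding Gamma_def by auto
qed

lemma G_smult:
  assumes a: "a \<in> carrier R" and x: "x \<in> Gamma R M a"
  shows "a \<odot>\<^bsub>M\<^esub> x \<in> Gamma R M a"
proof -
  obtain k :: nat where k: "k > 0" "(a [^] k) \<odot>\<^bsub>M\<^esub> x = \<zero>\<^bsub>M\<^esub>" "x \<in> carrier M"
    using x unfolding Gamma_def by blast
  have "(a [^] k) \<odot>\<^bsub>M\<^esub> (a \<odot>\<^bsub>M\<^esub> x) = \<zero>\<^bsub>M\<^esub>"
    using k a by (simp add: smult_assoc1[symmetric] R.m_comm[of "a [^] k" a] smult_assoc1)
  then show ?thesis using k a unfolding Gamma_def by (auto simp: smult_closed)
qed

lemma N_carr: "a \<in> carrier R \<Longrightarrow> aGamma R M a \<subseteq> carrier M"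
  unfolding aGamma_def Gamma_def by (auto simp: smult_closed)

lemma N_zero: "a \<in> carrier R \<Longrightarrow> \<zero>\<^bsub>M\<^esub> \<in> aGamma R M a"
  unfolding aGamma_def using G_zero by (auto intro!: image_eqI[of _ _ "\<zero>\<^bsub>M\<^esub>"])

lemma N_add:
  assumes a: "a \<in> carrier R" and x: "x \<in> aGamma R M a" and y: "y \<in> aGamma R M a"
  shows "x \<oplus>\<^bsub>M\<^esub> y \<in> aGamma R M a"
proof -
  obtain u v where "u \<in> Gamma R M a" "v \<in> Gamma R M a" "x = a \<odot>\<^bsub>M\<^esub> u" "y = a \<odot>\<^bsub>M\<^esub> v"
    using x y unfolding aGamma_def by auto
  moreover have "u \<in> carrier M" "v \<in> carrier M" using calculation G_carr by auto
  ultimately show ?thesis unfolding aGamma_def using a G_add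
    by (auto simp: smult_r_distr[symmetric] intro!: image_eqI[of _ _ "u \<oplus>\<^bsub>M\<^esub> v"])
qed

lemma N_neg:
  assumes a: "a \<in> carrier R" and x: "x \<in> aGamma R M a"
  shows "\<ominus>\<^bsub>M\<^esub> x \<in> aGamma R M a"
proof -
  obtain u where "u \<in> Gamma R M a" "x = a \<odot>\<^bsub>M\<^esub> u"
    using x unfolding aGamma_def by auto
  moreover have "u \<in> carrier M" using calculation G_carr by auto
  ultimately show ?thesis unfolding aGamma_def using a G_neg
    by (auto simp: smult_r_minus[symmetric] intro!: image_eqI[of _ _ "\<ominus>\<^bsub>M\<^esub> u"])
qed

lemma N_smult:
  assumes a: "a \<in> carrier R" and x: "x \<in> aGamma R M a"
  shows "a \<odot>\<^bsub>M\<^esub> x \<in> aGamma R M a"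
proof -
  obtain u where "u \<in> Gamma R M a" "x = a \<odot>\<^bsub>M\<^esub> u"
    using x unfolding aGamma_def by auto
  then show ?thesis unfolding aGamma_def using a G_smult by auto
qed

lemma coset_mem: "h \<in> carrier M \<Longrightarrow> \<zero>\<^bsub>M\<^esub> \<in> N \<Longrightarrow> h \<in> a_r_coset M N h"
  unfolding a_r_coset_def' by force

lemma coset_N:
  assumes a: "a \<in> carrier R" and h: "h \<in> aGamma R M a"
  shows "a_r_coset M (aGamma R M a) h = aGamma R M a"
proof
  show "a_r_coset M (aGamma R M a) h \<subseteq> aGamma R M a"
    unfolding a_r_coset_def' using N_add[OF a _ h] by auto
  show "aGamma R M a \<subseteq> a_r_coset M (aGamma R M a) h"
  proof
    fix n assume n: "n \<in> aGamma R M a"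
    have hc: "h \<in> carrier M" "n \<in> carrier M" using h n N_carr[OF a] by auto
    have "n = (n \<oplus>\<^bsub>M\<^esub> \<ominus>\<^bsub>M\<^esub> h) \<oplus>\<^bsub>M\<^esub> h"
      using hc by (simp add: M.add.m_assoc M.l_neg)
    moreover have "n \<oplus>\<^bsub>M\<^esub> \<ominus>\<^bsub>M\<^esub> h \<in> aGamma R M a"
      using N_add[OF a n N_neg[OF a h]] .
    ultimately show "n \<in> a_r_coset M (aGamma R M a) h"
      unfolding a_r_coset_def' by blast
  qed
qed

lemma smultQ:
  "module.smult (quot_module R M N) r S = (\<Union>x\<in>S. a_r_coset M N (r \<odot>\<^bsub>M\<^esub> x))"
  by (simp add: quot_module_def)

lemma smult_coset_sup:
  assumes "x \<in> carrier M" "\<zero>\<^bsub>M\<^esub> \<in> N"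
  shows "a_r_coset M N (r \<odot>\<^bsub>M\<^esub> x) \<subseteq> module.smult (quot_module R M N) r (a_r_coset M N x)"
  unfolding smultQ using coset_mem[OF assms] by blast

lemma smult_coset_a:
  assumes a: "a \<in> carrier R" and x: "x \<in> carrier M"
  shows "module.smult (quot_module R M (aGamma R M a)) a (a_r_coset M (aGamma R M a) x)
       = a_r_coset M (aGamma R M a) (a \<odot>\<^bsub>M\<^esub> x)" (is "?L = ?R")
proof
  show "?R \<subseteq> ?L" using smult_coset_sup[OF x N_zero[OF a]] .
  show "?L \<subseteq> ?R"
  proof
    fix z assume "z \<in> ?L"
    then obtain n n' where n: "n \<in> aGamma R M a" "n' \<in> aGamma R M a"
      and z: "z = n' \<oplus>\<^bsub>M\<^esub> (a \<odot>\<^bsub>M\<^esub> (n \<oplus>\<^bsub>M\<^esub> x))"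
      unfolding smultQ a_r_coset_def' by blast
    have c: "n \<in> carrier M" "n' \<in> carrier M" using n N_carr[OF a] by auto
    have "z = (n' \<oplus>\<^bsub>M\<^esub> a \<odot>\<^bsub>M\<^esub> n) \<oplus>\<^bsub>M\<^esub> (a \<odot>\<^bsub>M\<^esub> x)"
      using z c a x by (simp add: smult_r_distr M.add.m_assoc)
    moreover have "n' \<oplus>\<^bsub>M\<^esub> a \<odot>\<^bsub>M\<^esub> n \<in> aGamma R M a"
      using N_add[OF a n(2) N_smult[OF a n(1)]] .
    ultimately show "z \<in> ?R" unfolding a_r_coset_def' by blast
  qed
qed

end

theorem mainTheorem5:
  fixes R :: "('a, 'c) ring_scheme" and M :: "('a, 'b, 'd) module_scheme"
  assumes "cring R" and "module R M" and "a \<in> carrier R"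
  shows "aGamma R (quot_module R M (aGamma R M a)) a
           = {\<zero>\<^bsub>quot_module R M (aGamma R M a)\<^esub>}"
proof -
  interpret module R M by fact
  note a = assms(3)
  define N where "N = aGamma R M a"
  define Q where "Q = quot_module R M N"
  have zQ: "\<zero>\<^bsub>Q\<^esub> = N" "carrier Q = a_rcosets\<^bsub>M\<^esub> N"
    unfolding Q_def quot_module_def by simp_all
  have N0: "a_r_coset M N \<zero>\<^bsub>M\<^esub> = N"
    unfolding N_def using coset_N[OF a N_zero[OF a]] .
  have sub: "aGamma R Q a \<subseteq> {N}"
  proof
    fix T assume "T \<in> aGamma R Q a"
    then obtain S where S: "S \<in> Gamma R Q a" and T: "T = module.smult Q a S"
      unfolding aGamma_def by auto
    from S obtain k :: nat where k: "S \<in> carrier Q" "k > 0"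
      "module.smult Q (a [^]\<^bsub>R\<^esub> k) S = \<zero>\<^bsub>Q\<^esub>"
      unfolding Gamma_def by blast
    from k(1) obtain x where x: "x \<in> carrier M" "S = a_r_coset M N x"
      unfolding zQ A_RCOSETS_def' by blast
    have "a_r_coset M N ((a [^]\<^bsub>R\<^esub> k) \<odot>\<^bsub>M\<^esub> x) \<subseteq> N"
      using smult_coset_sup[OF x(1), of N "a [^]\<^bsub>R\<^esub> k"] N_zero[OF a] k(3) x(2) zQ
      unfolding Q_def N_def by simp
    moreover have "(a [^]\<^bsub>R\<^esub> k) \<odot>\<^bsub>M\<^esub> x \<in> a_r_coset M N ((a [^]\<^bsub>R\<^esub> k) \<odot>\<^bsub>M\<^esub> x)"
      using coset_mem[of "(a [^]\<^bsub>R\<^esub> k) \<odot>\<^bsub>M\<^esub> x" N] N_zero[OF a] x a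
      unfolding N_def by simp
    ultimately have "(a [^]\<^bsub>R\<^esub> k) \<odot>\<^bsub>M\<^esub> x \<in> aGamma R M a" unfolding N_def by blast
    then obtain y where y: "y \<in> Gamma R M a" "(a [^]\<^bsub>R\<^esub> k) \<odot>\<^bsub>M\<^esub> x = a \<odot>\<^bsub>M\<^esub> y"
      unfolding aGamma_def by auto
    then obtain m :: nat where m: "y \<in> carrier M" "m > 0" "(a [^]\<^bsub>R\<^esub> m) \<odot>\<^bsub>M\<^esub> y = \<zero>\<^bsub>M\<^esub>"
      unfolding Gamma_def by blast
    have "(a [^]\<^bsub>R\<^esub> (m + k)) \<odot>\<^bsub>M\<^esub> x = (a [^]\<^bsub>R\<^esub> m) \<odot>\<^bsub>M\<^esub> ((a [^]\<^bsub>R\<^esub> k) \<odot>\<^bsub>M\<^esub> x)"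
      using a x by (simp add: R.nat_pow_mult[symmetric] smult_assoc1[symmetric])
    also have "\<dots> = (a [^]\<^bsub>R\<^esub> m \<otimes>\<^bsub>R\<^esub> a) \<odot>\<^bsub>M\<^esub> y"
      using y m a by (simp add: smult_assoc1)
    also have "\<dots> = a \<odot>\<^bsub>M\<^esub> ((a [^]\<^bsub>R\<^esub> m) \<odot>\<^bsub>M\<^esub> y)"
      using m a by (simp add: R.m_comm[of "a [^]\<^bsub>R\<^esub> m" a] smult_assoc1)
    also have "\<dots> = \<zero>\<^bsub>M\<^esub>" using m a by simp
    finally have "x \<in> Gamma R M a" using x m k unfolding Gamma_def by (auto intro!: exI[of _ "m+k"])
    then have ax: "a \<odot>\<^bsub>M\<^esub> x \<in> N" unfolding N_def aGamma_def by auto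
    have "T = a_r_coset M N (a \<odot>\<^bsub>M\<^esub> x)"
      using T x smult_coset_a[OF a x(1)] unfolding Q_def N_def by simp
    also have "\<dots> = N" using coset_N[OF a] ax unfolding N_def by simp
    finally show "T \<in> {N}" by simp
  qed
  have NQ: "N \<in> carrier Q"
    unfolding zQ A_RCOSETS_def' using N0 by force
  have sN: "module.smult Q a N = N"
    using smult_coset_a[OF a M.zero_closed] N0 a unfolding Q_def N_def by simp
  have "N \<in> Gamma R Q a"
    unfolding Gamma_def using NQ sN a zQ by (auto intro!: exI[of _ 1])
  then have "N \<in> aGamma R Q a" unfolding aGamma_def using sN by force
  with sub show ?thesis unfolding Q_def N_def zQ[unfolded Q_def N_def] by auto
qed

end
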